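(* Let $(X,d)$ be a separable metric space, $T\colon X\to X$ Borel measurable, and $\mu$ a $T$-invariant Borel probability measure with Hausdorff dimension $\alpha$. Then $C_\phi\le 1/\alpha$ (with $1/0=\infty$), where \[C_\phi=\sup\big(\{0\}\cup\{s>0:\ \liminf_{n\to\infty}n^s d(T^nx,y)=0 \text{ for }\mu\times\mu\text{-a.e. }(x,y)\}\big).\]
   Context: The Hausdorff dimension of $\mu$ (with respect to $d$) is understood as $\inf\{\dim_H E:\ E \text{ Borel},\ \mu(E)=1\}$, where $\dim_H$ is Hausdorff dimension of sets. *)

theory Defs
  imports "HOL-Probability.Probability"
begin

definition hausdorff_approx :: "real \<Rightarrow> real \<Rightarrow> 'a::metric_space set \<Rightarrow> ennreal" where
  "hausdorff_approx s \<delta> E =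
     (INF U \<in> {U :: nat \<Rightarrow> 'a set. E \<subseteq> (\<Union>i. U i) \<and>
                 (\<forall>i. bounded (U i) \<and> diameter (U i) \<le> \<delta>)}.
        (\<Sum>i. ennreal (diameter (U i) powr s)))"

definition hausdorff_measure :: "real \<Rightarrow> 'a::metric_space set \<Rightarrow> ennreal" where
  "hausdorff_measure s E = (SUP \<delta> \<in> {0<..}. hausdorff_approx s \<delta> E)"

text \<open>Hausdorff dimension of a set: inf of s > 0 with H^s(E) = 0 (inf of the empty set is infinity).\<close>
definition hausdorff_dim :: "'a::metric_space set \<Rightarrow> ereal" where
  "hausdorff_dim E = (INF s \<in> {s::real. s > 0 \<and> hausdorff_measure s E = 0}. ereal s)"

definition measure_hausdorff_dim :: "'a::metric_space measure \<Rightarrow> ereal" where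
  "measure_hausdorff_dim M =
     (INF E \<in> {E. E \<in> sets borel \<and> emeasure M E = 1}. hausdorff_dim E)"

definition C_phi :: "'a::metric_space measure \<Rightarrow> ('a \<Rightarrow> 'a) \<Rightarrow> ereal" where
  "C_phi M T = Sup ({0} \<union> {ereal s | s. s > 0 \<and>
      (AE z in M \<Otimes>\<^sub>M M.
         liminf (\<lambda>n. ereal (real n powr s * dist ((T ^^ n) (fst z)) (snd z))) = 0)})"

end

theory Submission
  imports Defs
begin

lemma diam_ball_le:
  fixes c :: "'a::metric_space"
  assumes "0 \<le> r" shows "diameter (ball c r) \<le> 2 * r"
proof (cases "ball c r = {}")
  case True then show ?thesis using assms by simp
next
  case False
  have "dist x y \<le> 2 * r" if "x \<in> ball c r" "y \<in> ball c r" for x y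
    using that dist_triangle[of x y c] by (auto simp: dist_commute)
  then show ?thesis using False unfolding diameter_def
    by (auto intro!: cSUP_least)
qed

lemma approx_zero:
  fixes f :: "nat \<Rightarrow> 'a::metric_space"
  assumes s: "s > 0" and t: "t > 0" and st: "s * t > 1" and d: "\<delta> > 0"
    and E: "\<And>N. E \<subseteq> (\<Union>n\<in>{N..}. ball (f n) (real n powr - s))"
  shows "hausdorff_approx t \<delta> E = 0"
proof -
  define g where "g n = (2 * real n powr - s) powr t" for n
  have g_eq: "g n = 2 powr t * real n powr (- s * t)" for n
    unfolding g_def by (simp add: powr_mult powr_powr)
  have "summable (\<lambda>n. real n powr (- s * t))"
    using st by (subst summable_real_powr_iff) auto
  then have sg: "summable g" unfolding g_eq by (rule summable_mult)
  have g0: "0 \<le> g n" for n unfolding g_def by simp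
  have lim: "(\<lambda>n. real n powr - s) \<longlonglongrightarrow> 0"
    using s by (intro tendsto_neg_powr filterlim_real_sequentially) auto
  obtain N1 where N1: "\<And>n. n \<ge> N1 \<Longrightarrow> real n powr - s < \<delta> / 2"
    using order_tendstoD(2)[OF lim, of "\<delta>/2"] d by (auto simp: eventually_sequentially)
  show ?thesis
  proof (rule antisym[OF ennreal_le_epsilon], goal_cases)
    case (1 e)
    obtain N0 where N0: "\<And>n. n \<ge> N0 \<Longrightarrow> norm (\<Sum>i. g (i + n)) < e"
      using suminf_exist_split[OF 1(2) sg] by auto
    define N where "N = max N0 N1"
    define U where "U i = ball (f (i + N)) (real (i + N) powr - s)" for i
    have cov: "E \<subseteq> (\<Union>i. U i)"
    proof
      fix y assume "y \<in> E"
      then obtain n where "n \<ge> N" "y \<in> ball (f n) (real n powr - s)" using E[of N] by auto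
      then show "y \<in> (\<Union>i. U i)" unfolding U_def
        by (intro UN_I[of "n - N"]) auto
    qed
    have diam: "diameter (U i) \<le> 2 * real (i + N) powr - s" for i
      unfolding U_def by (rule diam_ball_le) simp
    have "\<forall>i. bounded (U i) \<and> diameter (U i) \<le> \<delta>"
    proof
      fix i
      have "real (i + N) powr - s < \<delta> / 2" using N1[of "i+N"] by (simp add: N_def)
      then show "bounded (U i) \<and> diameter (U i) \<le> \<delta>"
        using diam[of i] by (auto simp: U_def)
    qed
    with cov have "hausdorff_approx t \<delta> E \<le> (\<Sum>i. ennreal (diameter (U i) powr t))"
      unfolding hausdorff_approx_def by (intro INF_lower) auto
    also have "\<dots> \<le> (\<Sum>i. ennreal (g (i + N)))"
    proof (intro suminf_le ennreal_leI)
      fix i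
      have "0 \<le> diameter (U i)" by (simp add: diameter_ge_0 U_def)
      then show "diameter (U i) powr t \<le> g (i + N)"
        unfolding g_def using diam[of i] t by (intro powr_mono2) auto
    qed auto
    also have "\<dots> = ennreal (\<Sum>i. g (i + N))"
      using g0 sg by (intro suminf_ennreal2) (auto simp: summable_iff_shift)
    also have "\<dots> \<le> 0 + ennreal e"
      using N0[of N] by (auto simp: N_def intro!: ennreal_leI)
    finally show ?case .
  qed simp
qed

lemma dim_le:
  fixes f :: "nat \<Rightarrow> 'a::metric_space"
  assumes s: "s > 0"
    and E: "\<And>N. E \<subseteq> (\<Union>n\<in>{N..}. ball (f n) (real n powr - s))"
  shows "hausdorff_dim E \<le> ereal (1 / s)"
proof (rule ereal_le_epsilon2)
  fix e :: real assume e: "0 < e"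
  define t where "t = 1 / s + e"
  have es: "0 < e * s" using s e by simp
  have t1: "t > 0" unfolding t_def using s e by (simp add: add_pos_pos)
  have "s * t = 1 + e * s" using s by (simp add: t_def field_simps)
  then have t: "t > 0" "s * t > 1" using t1 es by auto
  have "hausdorff_measure t E = 0"
    unfolding hausdorff_measure_def
    using approx_zero[OF s t(1) t(2) _ E] by simp
  then have "hausdorff_dim E \<le> ereal t"
    unfolding hausdorff_dim_def using t by (intro INF_lower) auto
  then show "hausdorff_dim E \<le> ereal (1 / s) + ereal e" by (simp add: t_def)
qed

lemma hdim_nonneg: "0 \<le> hausdorff_dim E"
  unfolding hausdorff_dim_def by (intro INF_greatest) auto

theorem proposition6p10:
  fixes M :: "'a::metric_space measure" and T :: "'a \<Rightarrow> 'a" and \<alpha> :: ereal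
  assumes separable: "\<exists>D :: 'a set. countable D \<and> closure D = UNIV"
    and borel_M: "sets M = sets borel"
    and prob: "prob_space M"
    and T_meas: "T \<in> borel_measurable borel"
    and invariant: "distr M M T = M"
    and dim: "\<alpha> = measure_hausdorff_dim M"
  shows "C_phi M T \<le> (if \<alpha> = 0 then \<infinity> else 1 / \<alpha>)"
proof -
  interpret P: prob_space M by (rule prob)
  interpret PS: pair_sigma_finite M M
    by (intro pair_sigma_finite.intro prob_space_imp_sigma_finite prob)
  have spM: "space M = UNIV" using sets_eq_imp_space_eq[OF borel_M] by simp
  have a0: "0 \<le> \<alpha>" unfolding dim measure_hausdorff_dim_def
    by (intro INF_greatest hdim_nonneg)
  have key: "\<alpha> \<le> ereal (1 / s)"
    if s: "s > 0" and ae: "AE z in M \<Otimes>\<^sub>M M.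
         liminf (\<lambda>n. ereal (real n powr s * dist ((T ^^ n) (fst z)) (snd z))) = 0" for s
  proof -
    have "AE x in M. AE y in M. liminf (\<lambda>n. ereal (real n powr s * dist ((T ^^ n) x) y)) = 0"
      using PS.AE_pair[OF ae] by simp
    then obtain x where x: "AE y in M. liminf (\<lambda>n. ereal (real n powr s * dist ((T ^^ n) x) y)) = 0"
    proof -
      assume r: "\<And>x. AE y in M. liminf (\<lambda>n. ereal (real n powr s * dist ((T ^^ n) x) y)) = 0 \<Longrightarrow> thesis"
      show thesis
      proof (rule ccontr)
        assume "\<not> thesis"
        with r \<open>AE x in M. _\<close> have "AE x in M. False"
          by (metis (no_types, lifting) eventually_mono)
        then show False using P.AE_False by simp
      qed
    qed
    define E where "E = (\<Inter>N. \<Union>n\<in>{N..}. ball ((T ^^ n) x) (real n powr - s))"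
    have Eb: "E \<in> sets borel" unfolding E_def
      by (intro sets.countable_INT' borel_open open_UN) auto
    have inE: "y \<in> E" if l: "liminf (\<lambda>n. ereal (real n powr s * dist ((T ^^ n) x) y)) = 0" for y
    proof -
      have "\<exists>n\<ge>N. dist ((T ^^ n) x) y < real n powr - s" for N
      proof (rule ccontr)
        assume "\<not> ?thesis"
        then have h: "\<And>n. n \<ge> N \<Longrightarrow> real n powr - s \<le> dist ((T ^^ n) x) y" by force
        define N' where "N' = max N 1"
        have "1 \<le> real n powr s * dist ((T ^^ n) x) y" if "n \<ge> N'" for n
        proof -
          have n: "real n > 0" "n \<ge> N" using that by (auto simp: N'_def)
          have "1 = real n powr s * real n powr - s" using n by (simp add: powr_minus)
          also have "\<dots> \<le> real n powr s * dist ((T ^^ n) x) y"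
            using h[OF n(2)] by (intro mult_left_mono) auto
          finally show ?thesis .
        qed
        then have "(1::ereal) \<le> (INF m\<in>{N'..}. ereal (real m powr s * dist ((T ^^ m) x) y))"
          by (intro INF_greatest) auto
        also have "\<dots> \<le> liminf (\<lambda>n. ereal (real n powr s * dist ((T ^^ n) x) y))"
          unfolding liminf_SUP_INF by (intro SUP_upper) auto
        finally show False using l by simp
      qed
      then show ?thesis unfolding E_def by (auto simp: dist_commute)
    qed
    have "AE y in M. y \<in> E" using x by (auto elim: eventually_mono intro: inE)
    then have "emeasure M E = emeasure M (space M)"
      using Eb borel_M by (intro emeasure_eq_AE) (auto simp: spM)
    then have m1: "emeasure M E = 1" by (simp add: P.emeasure_space_1)
    have "\<alpha> \<le> hausdorff_dim E"
      unfolding dim measure_hausdorff_dim_def using Eb m1 by (intro INF_lower) auto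
    also have "\<dots> \<le> ereal (1 / s)"
      using s by (intro dim_le) (auto simp: E_def)
    finally show ?thesis .
  qed
  show ?thesis
    unfolding C_phi_def
  proof (intro Sup_least, elim UnE)
    fix y :: ereal assume "y \<in> {0}"
    then show "y \<le> (if \<alpha> = 0 then \<infinity> else 1 / \<alpha>)"
      using a0 by (cases \<alpha>) auto
  next
    fix y :: ereal assume "y \<in> {ereal s |s. s > 0 \<and> (AE z in M \<Otimes>\<^sub>M M.
         liminf (\<lambda>n. ereal (real n powr s * dist ((T ^^ n) (fst z)) (snd z))) = 0)}"
    then obtain s where y: "y = ereal s" and s: "s > 0" and k: "\<alpha> \<le> ereal (1 / s)"
      using key by blast
    show "y \<le> (if \<alpha> = 0 then \<infinity> else 1 / \<alpha>)"
    proof (cases \<alpha>)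
      case (real a)
      show ?thesis
      proof (cases "a = 0")
        case False
        then have "a > 0" using a0 real by auto
        then have "s \<le> 1 / a" using k real s by (auto simp: field_simps)
        moreover have "1 / ereal a = ereal (1 / a)" using False
          by (metis ereal_divide one_ereal_def)
        ultimately show ?thesis using y real False by simp
      qed (use real in simp)
    qed (use k a0 in auto)
  qed
qed

end
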